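(* Let $d\ge 2$, $\lambda>0$, $L\ge 1$ an integer, and let $R(z)=(H_L-z)^{-1}$ for $z\in\mathbb{C}$ with $\operatorname{Im}z>0$, where $H_L=\Delta_L+\lambda V$ on $\ell^2(\mathbb{Z}^d_L)$, $\Delta_L$ the nearest-neighbour Laplacian on $\mathbb{Z}^d_L=\mathbb{Z}^d/L\mathbb{Z}^d$ and $V=\sum_x g_x|x\rangle\langle x|$ with $(g_x)$ i.i.d. standard Gaussians. Let $\tilde\theta(z):=\mathbb{E}R_{00}(z)$ and $\tilde M(z):=(\Delta_L-(z+\lambda^2\tilde\theta(z)))^{-1}$. Then $$\mathbb{E}R=\tilde M(\mathrm{Id}+\mathfrak{E}_{\rm loc}),\qquad \mathfrak{E}_{\rm loc}:=\lambda^2\,\mathbb{E}\big(\mathcal{D}[R-\mathbb{E}R]\,R\big).$$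
   Context: For an operator $A$ on $\ell^2(\mathbb{Z}^d_L)$, $\mathcal{D}[A]:=\sum_{x}A_{xx}|x\rangle\langle x|$ is the diagonal part of $A$ (here $|x\rangle\langle x|$ is the rank-one projection onto the basis vector $\delta_x$). *)

theory Defs
  imports "HOL-Probability.Probability"
begin

text \<open>Points of the discrete torus Z^d_L = Z^d / L Z^d, represented by canonical
  coordinates in {0..L-1} for the first d coordinates (and 0 elsewhere).\<close>
definition torus :: "nat \<Rightarrow> nat \<Rightarrow> (nat \<Rightarrow> nat) set" where
  "torus d L = {x. (\<forall>i<d. x i < L) \<and> (\<forall>i\<ge>d. x i = 0)}"

definition origin :: "nat \<Rightarrow> nat" where
  "origin = (\<lambda>_. 0)"

definition step_plus :: "nat \<Rightarrow> nat \<Rightarrow> (nat \<Rightarrow> nat) \<Rightarrow> (nat \<Rightarrow> nat)" where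
  "step_plus L i x = x(i := (x i + 1) mod L)"

definition step_minus :: "nat \<Rightarrow> nat \<Rightarrow> (nat \<Rightarrow> nat) \<Rightarrow> (nat \<Rightarrow> nat)" where
  "step_minus L i x = x(i := (x i + L - 1) mod L)"

text \<open>Operators on l^2(Z^d_L) as complex matrices indexed by torus points
  (entries outside the torus are irrelevant / zero).\<close>
type_synonym op = "(nat \<Rightarrow> nat) \<Rightarrow> (nat \<Rightarrow> nat) \<Rightarrow> complex"

definition mat_id :: "(nat \<Rightarrow> nat) set \<Rightarrow> op" where
  "mat_id T = (\<lambda>x y. if x \<in> T \<and> y \<in> T \<and> x = y then 1 else 0)"

definition mat_mult :: "(nat \<Rightarrow> nat) set \<Rightarrow> op \<Rightarrow> op \<Rightarrow> op" where
  "mat_mult T A B = (\<lambda>x y. if x \<in> T \<and> y \<in> T then (\<Sum>w\<in>T. A x w * B w y) else 0)"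

definition mat_add :: "(nat \<Rightarrow> nat) set \<Rightarrow> op \<Rightarrow> op \<Rightarrow> op" where
  "mat_add T A B = (\<lambda>x y. if x \<in> T \<and> y \<in> T then A x y + B x y else 0)"

definition mat_extensional :: "(nat \<Rightarrow> nat) set \<Rightarrow> op \<Rightarrow> bool" where
  "mat_extensional T B \<longleftrightarrow> (\<forall>x y. x \<notin> T \<or> y \<notin> T \<longrightarrow> B x y = 0)"

definition mat_inv :: "(nat \<Rightarrow> nat) set \<Rightarrow> op \<Rightarrow> op" where
  "mat_inv T A = (THE B. mat_extensional T B \<and> mat_mult T A B = mat_id T \<and> mat_mult T B A = mat_id T)"

definition diag_part :: "(nat \<Rightarrow> nat) set \<Rightarrow> op \<Rightarrow> op" where
  "diag_part T A = (\<lambda>x y. if x \<in> T \<and> y \<in> T \<and> x = y then A x x else 0)"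

definition laplacian :: "nat \<Rightarrow> nat \<Rightarrow> op" where
  "laplacian d L = (\<lambda>x y. if x \<in> torus d L \<and> y \<in> torus d L then
      (\<Sum>i<d. (of_bool (y = step_plus L i x) + of_bool (y = step_minus L i x)))
      - 2 * of_nat d * of_bool (x = y)
    else 0)"

definition hamiltonian :: "nat \<Rightarrow> nat \<Rightarrow> real \<Rightarrow> ((nat \<Rightarrow> nat) \<Rightarrow> real) \<Rightarrow> op" where
  "hamiltonian d L lam g = (\<lambda>x y. laplacian d L x y +
      (if x \<in> torus d L \<and> y \<in> torus d L \<and> x = y then complex_of_real (lam * g x) else 0))"

definition resolvent :: "nat \<Rightarrow> nat \<Rightarrow> real \<Rightarrow> ((nat \<Rightarrow> nat) \<Rightarrow> real) \<Rightarrow> complex \<Rightarrow> op" where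
  "resolvent d L lam g z = mat_inv (torus d L)
     (\<lambda>x y. hamiltonian d L lam g x y - z * mat_id (torus d L) x y)"

definition gauss_field :: "(nat \<Rightarrow> nat) set \<Rightarrow> ((nat \<Rightarrow> nat) \<Rightarrow> real) measure" where
  "gauss_field T = PiM T (\<lambda>_. density lborel std_normal_density)"

definition expect_mat :: "(nat \<Rightarrow> nat) set \<Rightarrow> (((nat \<Rightarrow> nat) \<Rightarrow> real) \<Rightarrow> op) \<Rightarrow> op" where
  "expect_mat T F = (\<lambda>x y. \<integral>g. F g x y \<partial>(gauss_field T))"

end

theory Submission
  imports Defs "Jordan_Normal_Form.Determinant" "HOL-Real_Asymp.Real_Asymp"
begin

lemma finite_torus: "finite (torus d L)"
proof -
  have "torus d L = {f. \<forall>x. (x \<in> {..<d} \<longrightarrow> f x \<in> {..<L}) \<and> (x \<notin> {..<d} \<longrightarrow> f x = 0)}"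
    unfolding torus_def by (intro Collect_cong) (auto simp: not_less)
  moreover have "finite {f. \<forall>x. (x \<in> {..<d} \<longrightarrow> f x \<in> {..<L}) \<and> (x \<notin> {..<d} \<longrightarrow> f x = (0::nat))}"
    by (rule finite_set_of_finite_funs) auto
  ultimately show ?thesis by simp
qed

lemma origin_torus: "L \<ge> 1 \<Longrightarrow> origin \<in> torus d L"
  by (auto simp: torus_def origin_def)

lemma mat_mult_id_left: "x \<in> T \<Longrightarrow> y \<in> T \<Longrightarrow> finite T \<Longrightarrow> mat_mult T (mat_id T) B x y = B x y"
proof -
  assume a: "x \<in> T" "y \<in> T" "finite T"
  have "mat_mult T (mat_id T) B x y = (\<Sum>w\<in>T. (if x = w then 1 else 0) * B w y)"
    using a by (simp add: mat_mult_def mat_id_def)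
  also have "\<dots> = (\<Sum>w\<in>T. if x = w then B w y else 0)" by (rule sum.cong) auto
  also have "\<dots> = B x y" using a by simp
  finally show ?thesis .
qed

lemma mat_mult_id_right: "x \<in> T \<Longrightarrow> y \<in> T \<Longrightarrow> finite T \<Longrightarrow> mat_mult T B (mat_id T) x y = B x y"
proof -
  assume a: "x \<in> T" "y \<in> T" "finite T"
  have "mat_mult T B (mat_id T) x y = (\<Sum>w\<in>T. B x w * (if w = y then 1 else 0))"
    using a by (simp add: mat_mult_def mat_id_def)
  also have "\<dots> = (\<Sum>w\<in>T. if w = y then B x w else 0)" by (rule sum.cong) auto
  also have "\<dots> = B x y" using a by simp
  finally show ?thesis .
qed

lemma mat_mult_assoc:
  assumes "finite T" "x \<in> T" "y \<in> T"
  shows "mat_mult T A (mat_mult T B C) x y = mat_mult T (mat_mult T A B) C x y"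
proof -
  have "mat_mult T A (mat_mult T B C) x y = (\<Sum>w\<in>T. \<Sum>u\<in>T. A x w * B w u * C u y)"
    using assms by (auto simp: mat_mult_def sum_distrib_left mult.assoc intro!: sum.cong)
  also have "\<dots> = (\<Sum>u\<in>T. \<Sum>w\<in>T. A x w * B w u * C u y)" by (rule sum.swap)
  also have "\<dots> = mat_mult T (mat_mult T A B) C x y"
    using assms by (auto simp: mat_mult_def sum_distrib_right intro!: sum.cong)
  finally show ?thesis .
qed

lemma mat_inv_eq:
  assumes T: "finite T" and B: "mat_extensional T B" "mat_mult T A B = mat_id T" "mat_mult T B A = mat_id T"
  shows "mat_inv T A = B"
  unfolding mat_inv_def
proof (rule the1_equality)
  show "\<exists>!B. mat_extensional T B \<and> mat_mult T A B = mat_id T \<and> mat_mult T B A = mat_id T"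
  proof (rule ex1I[of _ B])
    fix B' assume B': "mat_extensional T B' \<and> mat_mult T A B' = mat_id T \<and> mat_mult T B' A = mat_id T"
    show "B' = B"
    proof (intro ext)
      fix x y
      show "B' x y = B x y"
      proof (cases "x \<in> T \<and> y \<in> T")
        case True
        have "B' x y = mat_mult T B' (mat_mult T A B) x y"
          using True T B by (simp add: mat_mult_id_right)
        also have "\<dots> = mat_mult T (mat_mult T B' A) B x y"
          using True T by (simp add: mat_mult_assoc)
        also have "\<dots> = B x y" using True T B' by (simp add: mat_mult_id_left)
        finally show ?thesis .
      next
        case False
        then show ?thesis using B B' by (auto simp: mat_extensional_def)
      qed
    qed
  qed (use B in auto)
qed (use B in auto)

section \<open>Existence of inverses via Jordan_Normal_Form\<close>

definition tenum :: "(nat \<Rightarrow> nat) set \<Rightarrow> nat \<Rightarrow> (nat \<Rightarrow> nat)" where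
  "tenum T = (SOME e. bij_betw e {0..<card T} T)"

definition idx :: "(nat \<Rightarrow> nat) set \<Rightarrow> (nat \<Rightarrow> nat) \<Rightarrow> nat" where
  "idx T = the_inv_into {0..<card T} (tenum T)"

definition toM :: "(nat \<Rightarrow> nat) set \<Rightarrow> op \<Rightarrow> complex mat" where
  "toM T A = mat (card T) (card T) (\<lambda>(i,j). A (tenum T i) (tenum T j))"

definition inv_form :: "(nat \<Rightarrow> nat) set \<Rightarrow> op \<Rightarrow> op" where
  "inv_form T A = (\<lambda>x y. if x \<in> T \<and> y \<in> T then
      adj_mat (toM T A) $$ (idx T x, idx T y) / Determinant.det (toM T A) else 0)"

lemma enum_bij: "finite T \<Longrightarrow> bij_betw (tenum T) {0..<card T} T"
  unfolding tenum_def using ex_bij_betw_nat_finite[of T] by (metis someI_ex)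

lemma enum_in: "finite T \<Longrightarrow> i < card T \<Longrightarrow> tenum T i \<in> T"
  using enum_bij[of T] by (auto dest: bij_betw_apply)

lemma idx_lt: "finite T \<Longrightarrow> x \<in> T \<Longrightarrow> idx T x < card T"
  using enum_bij[of T] unfolding idx_def
  by (metis atLeastLessThan_iff bij_betw_def the_inv_into_into order_refl)

lemma enum_idx: "finite T \<Longrightarrow> x \<in> T \<Longrightarrow> tenum T (idx T x) = x"
  using enum_bij[of T] unfolding idx_def by (simp add: f_the_inv_into_f_bij_betw)

lemma idx_enum: "finite T \<Longrightarrow> i < card T \<Longrightarrow> idx T (tenum T i) = i"
  using enum_bij[of T] unfolding idx_def
  by (simp add: bij_betw_def the_inv_into_f_f)

lemma sum_enum: "finite T \<Longrightarrow> (\<Sum>w\<in>T. f w) = (\<Sum>k\<in>{0..<card T}. f (tenum T k))"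
  using sum.reindex_bij_betw[OF enum_bij[of T], of f] by simp

lemma toM_carrier: "toM T A \<in> carrier_mat (card T) (card T)"
  by (simp add: toM_def)

definition inj_cond :: "(nat \<Rightarrow> nat) set \<Rightarrow> op \<Rightarrow> bool" where
  "inj_cond T A \<longleftrightarrow> (\<forall>v. (\<forall>x\<in>T. (\<Sum>w\<in>T. A x w * v w) = 0) \<longrightarrow> (\<forall>w\<in>T. v w = 0))"

lemma det_toM_nz:
  assumes T: "finite T" and inj: "inj_cond T A"
  shows "Determinant.det (toM T A) \<noteq> 0"
proof
  let ?n = "card T"
  assume "Determinant.det (toM T A) = 0"
  then obtain v where v: "v \<in> carrier_vec ?n" "v \<noteq> 0\<^sub>v ?n" "toM T A *\<^sub>v v = 0\<^sub>v ?n"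
    using det_0_iff_vec_prod_zero[OF toM_carrier] by blast
  define u where "u w = v $ idx T w" for w
  have "\<forall>x\<in>T. (\<Sum>w\<in>T. A x w * u w) = 0"
  proof
    fix x assume x: "x \<in> T"
    have "(\<Sum>w\<in>T. A x w * u w) = (\<Sum>k\<in>{0..<?n}. A x (tenum T k) * v $ k)"
      using T by (simp add: sum_enum[OF T] u_def idx_enum)
    also have "\<dots> = (toM T A *\<^sub>v v) $ idx T x"
      using v(1) T x idx_lt[OF T x]
      by (simp add: toM_def scalar_prod_def enum_idx)
    also have "\<dots> = 0" using v(3) idx_lt[OF T x] by simp
    finally show "(\<Sum>w\<in>T. A x w * u w) = 0" .
  qed
  with inj have u0: "\<forall>w\<in>T. u w = 0" unfolding inj_cond_def by blast
  have "v = 0\<^sub>v ?n"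
  proof (rule eq_vecI)
    fix k assume "k < dim_vec (0\<^sub>v ?n :: complex vec)"
    then have k: "k < ?n" by simp
    have "v $ k = u (tenum T k)" using T k by (simp add: u_def idx_enum)
    also have "\<dots> = 0" using u0 enum_in[OF T k] by simp
    finally show "v $ k = 0\<^sub>v ?n $ k" using k by simp
  qed (use v in simp)
  with v(2) show False by simp
qed

lemma toM_index: "finite T \<Longrightarrow> i < card T \<Longrightarrow> j < card T \<Longrightarrow> toM T A $$ (i,j) = A (tenum T i) (tenum T j)"
  by (simp add: toM_def)

lemma idx_eq_iff: "finite T \<Longrightarrow> x \<in> T \<Longrightarrow> y \<in> T \<Longrightarrow> (idx T x = idx T y) = (x = y)"
  by (metis enum_idx)

lemma inv_form_inverse:
  assumes T: "finite T" and inj: "inj_cond T A"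
  shows "mat_extensional T (inv_form T A)" "mat_mult T A (inv_form T A) = mat_id T"
        "mat_mult T (inv_form T A) A = mat_id T"
proof -
  define n where "n = card T"
  define M where "M = toM T A"
  define D where "D = Determinant.det M"
  define J where "J = adj_mat M"
  have Mc: "M \<in> carrier_mat n n" unfolding M_def n_def by (rule toM_carrier)
  have D: "D \<noteq> 0" unfolding D_def M_def by (rule det_toM_nz[OF T inj])
  have J: "J \<in> carrier_mat n n" "M * J = D \<cdot>\<^sub>m 1\<^sub>m n" "J * M = D \<cdot>\<^sub>m 1\<^sub>m n"
    unfolding J_def D_def using adj_mat[OF Mc] by auto
  have inv_eq: "inv_form T A x y = J $$ (idx T x, idx T y) / D" if "x \<in> T" "y \<in> T" for x y
    using that unfolding inv_form_def J_def D_def M_def by simp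
  have Mi: "M $$ (i, j) = A (tenum T i) (tenum T j)" if "i < n" "j < n" for i j
    using that T unfolding M_def n_def by (simp add: toM_index)
  show "mat_extensional T (inv_form T A)"
    by (simp add: mat_extensional_def inv_form_def)
  show "mat_mult T A (inv_form T A) = mat_id T"
  proof (intro ext)
    fix x y
    show "mat_mult T A (inv_form T A) x y = mat_id T x y"
    proof (cases "x \<in> T \<and> y \<in> T")
      case True
      then have x: "x \<in> T" and y: "y \<in> T" by auto
      have ix: "idx T x < n" and iy: "idx T y < n" using idx_lt[OF T] x y n_def by auto
      have "mat_mult T A (inv_form T A) x y = (\<Sum>w\<in>T. A x w * (J $$ (idx T w, idx T y) / D))"
        using True by (simp add: mat_mult_def inv_eq)
      also have "\<dots> = (\<Sum>k\<in>{0..<n}. A x (tenum T k) * (J $$ (idx T (tenum T k), idx T y) / D))"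
        unfolding n_def by (rule sum_enum[OF T])
      also have "\<dots> = (\<Sum>k\<in>{0..<n}. M $$ (idx T x, k) * J $$ (k, idx T y)) / D"
        unfolding sum_divide_distrib
        by (rule sum.cong[OF refl]) (use T ix n_def in \<open>auto simp: Mi idx_enum enum_idx[OF T x]\<close>)
      also have "\<dots> = (M * J) $$ (idx T x, idx T y) / D"
        using J(1) Mc ix iy by (simp add: scalar_prod_def)
      also have "\<dots> = (if idx T x = idx T y then 1 else 0)"
        using J(2) D ix iy by simp
      also have "\<dots> = (if x = y then 1 else 0)"
        using idx_eq_iff[OF T x y] by simp
      finally show ?thesis using True by (simp add: mat_id_def)
    next
      case False then show ?thesis by (auto simp: mat_mult_def mat_id_def)
    qed
  qed
  show "mat_mult T (inv_form T A) A = mat_id T"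
  proof (intro ext)
    fix x y
    show "mat_mult T (inv_form T A) A x y = mat_id T x y"
    proof (cases "x \<in> T \<and> y \<in> T")
      case True
      then have x: "x \<in> T" and y: "y \<in> T" by auto
      have ix: "idx T x < n" and iy: "idx T y < n" using idx_lt[OF T] x y n_def by auto
      have "mat_mult T (inv_form T A) A x y = (\<Sum>w\<in>T. (J $$ (idx T x, idx T w) / D) * A w y)"
        using True by (simp add: mat_mult_def inv_eq)
      also have "\<dots> = (\<Sum>k\<in>{0..<n}. (J $$ (idx T x, idx T (tenum T k)) / D) * A (tenum T k) y)"
        unfolding n_def by (rule sum_enum[OF T])
      also have "\<dots> = (\<Sum>k\<in>{0..<n}. J $$ (idx T x, k) * M $$ (k, idx T y)) / D"
        unfolding sum_divide_distrib
        by (rule sum.cong[OF refl]) (use T iy n_def in \<open>auto simp: Mi idx_enum enum_idx[OF T y]\<close>)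
      also have "\<dots> = (J * M) $$ (idx T x, idx T y) / D"
        using J(1) Mc ix iy by (simp add: scalar_prod_def)
      also have "\<dots> = (if idx T x = idx T y then 1 else 0)"
        using J(3) D ix iy by simp
      also have "\<dots> = (if x = y then 1 else 0)"
        using idx_eq_iff[OF T x y] by simp
      finally show ?thesis using True by (simp add: mat_id_def)
    next
      case False then show ?thesis by (auto simp: mat_mult_def mat_id_def)
    qed
  qed
qed

lemma mat_inv_form:
  assumes "finite T" "inj_cond T A"
  shows "mat_inv T A = inv_form T A"
  using inv_form_inverse[OF assms] by (intro mat_inv_eq[OF assms(1)])

definition herm :: "(nat \<Rightarrow> nat) set \<Rightarrow> op \<Rightarrow> bool" where
  "herm T H \<longleftrightarrow> (\<forall>x\<in>T. \<forall>y\<in>T. cnj (H x y) = H y x)"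

lemma real_if_cnj: "cnj q = q \<Longrightarrow> Im q = 0"
proof -
  assume "cnj q = q"
  then have "Im (cnj q) = Im q" by simp
  then show ?thesis by simp
qed

lemma quad_real:
  assumes T: "finite T" and H: "herm T H"
  shows "Im (\<Sum>x\<in>T. \<Sum>y\<in>T. cnj (v x) * H x y * v y) = 0"
proof -
  let ?Q = "\<Sum>x\<in>T. \<Sum>y\<in>T. cnj (v x) * H x y * v y"
  have "cnj ?Q = (\<Sum>x\<in>T. \<Sum>y\<in>T. v x * H y x * cnj (v y))"
    using H unfolding herm_def by (auto simp: cnj_sum intro!: sum.cong)
  also have "\<dots> = (\<Sum>y\<in>T. \<Sum>x\<in>T. v x * H y x * cnj (v y))" by (rule sum.swap)
  also have "\<dots> = ?Q" by (auto intro!: sum.cong simp: mult_ac)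
  finally have "cnj ?Q = ?Q" .
  then show ?thesis by (rule real_if_cnj)
qed

lemma Im_mult_of_real: "Im (w * complex_of_real r) = Im w * r"
  by simp

lemma quad_form:
  assumes T: "finite T" and H: "herm T H"
  shows "Im (\<Sum>x\<in>T. cnj (v x) * (\<Sum>y\<in>T. (H x y - w * mat_id T x y) * v y))
         = - Im w * (\<Sum>x\<in>T. (cmod (v x))\<^sup>2)"
proof -
  have eq: "(\<Sum>y\<in>T. (H x y - w * mat_id T x y) * v y) = (\<Sum>y\<in>T. H x y * v y) - w * v x"
    if "x \<in> T" for x
  proof -
    have "(\<Sum>y\<in>T. (H x y - w * mat_id T x y) * v y) = (\<Sum>y\<in>T. H x y * v y) - (\<Sum>y\<in>T. w * mat_id T x y * v y)"
      by (simp add: algebra_simps sum_subtractf)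
    also have "(\<Sum>y\<in>T. w * mat_id T x y * v y) = (\<Sum>y\<in>T. if y = x then w * v y else 0)"
      using that by (intro sum.cong) (auto simp: mat_id_def)
    also have "\<dots> = w * v x" using T that by simp
    finally show ?thesis .
  qed
  have "(\<Sum>x\<in>T. cnj (v x) * (\<Sum>y\<in>T. (H x y - w * mat_id T x y) * v y))
      = (\<Sum>x\<in>T. cnj (v x) * (\<Sum>y\<in>T. H x y * v y) - w * (cnj (v x) * v x))"
    by (rule sum.cong[OF refl], subst eq, assumption, simp add: algebra_simps)
  also have "\<dots> = (\<Sum>x\<in>T. \<Sum>y\<in>T. cnj (v x) * H x y * v y) - w * (\<Sum>x\<in>T. cnj (v x) * v x)"
    by (simp add: sum_subtractf sum_distrib_left mult.assoc)
  also have "(\<Sum>x\<in>T. cnj (v x) * v x) = complex_of_real (\<Sum>x\<in>T. (cmod (v x))\<^sup>2)"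
    unfolding of_real_sum complex_norm_square by (rule sum.cong) (simp_all add: mult.commute)
  finally have "(\<Sum>x\<in>T. cnj (v x) * (\<Sum>y\<in>T. (H x y - w * mat_id T x y) * v y))
      = (\<Sum>x\<in>T. \<Sum>y\<in>T. cnj (v x) * H x y * v y) - w * complex_of_real (\<Sum>x\<in>T. (cmod (v x))\<^sup>2)" .
  then have "Im (\<Sum>x\<in>T. cnj (v x) * (\<Sum>y\<in>T. (H x y - w * mat_id T x y) * v y))
      = Im (\<Sum>x\<in>T. \<Sum>y\<in>T. cnj (v x) * H x y * v y) - Im w * (\<Sum>x\<in>T. (cmod (v x))\<^sup>2)"
    by (simp only: minus_complex.sel Im_mult_of_real)
  then show ?thesis using quad_real[OF T H, of v] by simp
qed

lemma herm_inj:
  assumes T: "finite T" and H: "herm T H" and w: "Im w > 0"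
  shows "inj_cond T (\<lambda>x y. H x y - w * mat_id T x y)"
  unfolding inj_cond_def
proof (intro allI impI)
  fix v assume v: "\<forall>x\<in>T. (\<Sum>y\<in>T. (H x y - w * mat_id T x y) * v y) = 0"
  have "- Im w * (\<Sum>x\<in>T. (cmod (v x))\<^sup>2) = 0"
    using quad_form[OF T H, of v w] v by simp
  with w have "(\<Sum>x\<in>T. (cmod (v x))\<^sup>2) = 0" by simp
  then have "\<forall>x\<in>T. (cmod (v x))\<^sup>2 = 0"
    using T by (subst (asm) sum_nonneg_eq_0_iff) auto
  then show "\<forall>w\<in>T. v w = 0" by simp
qed

lemma herm_inverse:
  assumes T: "finite T" and H: "herm T H" and w: "Im w > 0"
  defines "B \<equiv> mat_inv T (\<lambda>x y. H x y - w * mat_id T x y)"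
  shows "mat_extensional T B" "mat_mult T (\<lambda>x y. H x y - w * mat_id T x y) B = mat_id T"
        "mat_mult T B (\<lambda>x y. H x y - w * mat_id T x y) = mat_id T"
  using inv_form_inverse[OF T herm_inj[OF T H w]] mat_inv_form[OF T herm_inj[OF T H w]]
  unfolding B_def by auto

lemma col_bound:
  assumes T: "finite T" and H: "herm T H" and w: "Im w > 0"
    and B: "mat_mult T (\<lambda>x y. H x y - w * mat_id T x y) B = mat_id T"
    and u: "u \<in> T" and v: "v \<in> T"
  shows "cmod (B u v) \<le> 1 / Im w" "Im (B v v) \<ge> 0"
proof -
  define c where "c x = B x v" for x
  define S where "S = (\<Sum>x\<in>T. (cmod (c x))\<^sup>2)"
  have col: "(\<Sum>y\<in>T. (H x y - w * mat_id T x y) * c y) = (if x = v then 1 else 0)" if "x \<in> T" for x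
  proof -
    have "mat_mult T (\<lambda>x y. H x y - w * mat_id T x y) B x v = mat_id T x v" using B by simp
    then show ?thesis using that v by (simp add: mat_mult_def mat_id_def c_def)
  qed
  have "(\<Sum>x\<in>T. cnj (c x) * (\<Sum>y\<in>T. (H x y - w * mat_id T x y) * c y))
        = (\<Sum>x\<in>T. if x = v then cnj (c x) else 0)"
    by (intro sum.cong) (auto simp: col)
  also have "\<dots> = cnj (c v)" using T v by simp
  finally have "Im (cnj (c v)) = - Im w * S"
    using quad_form[OF T H, of c w] unfolding S_def by simp
  then have ImS: "Im (c v) = Im w * S" by simp
  have S0: "S \<ge> 0" unfolding S_def by (intro sum_nonneg) auto
  have single: "(cmod (c x))\<^sup>2 \<le> S" if "x \<in> T" for x
    unfolding S_def using T that by (intro member_le_sum) auto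
  show "Im (B v v) \<ge> 0" using ImS S0 w unfolding c_def by simp
  have "Im (c v) \<le> cmod (c v)" by (rule order_trans[OF abs_ge_self abs_Im_le_cmod])
  also have "cmod (c v) \<le> sqrt S" using single[OF v] by (simp add: real_le_rsqrt)
  finally have "Im w * S \<le> sqrt S" using ImS by simp
  then have "Im w * (sqrt S)\<^sup>2 \<le> sqrt S" using S0 by simp
  then have "sqrt S \<le> 1 / Im w"
  proof (cases "sqrt S = 0")
    case False
    then have "sqrt S > 0" using S0 by simp
    have "(Im w * sqrt S) * sqrt S \<le> 1 * sqrt S"
      using \<open>Im w * (sqrt S)\<^sup>2 \<le> sqrt S\<close> by (simp add: power2_eq_square mult.assoc)
    then have "Im w * sqrt S \<le> 1" using \<open>sqrt S > 0\<close> by (rule mult_right_le_imp_le)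
    then show ?thesis using w by (simp add: field_simps)
  qed (use w in simp)
  moreover have "cmod (c u) \<le> sqrt S" using single[OF u] by (simp add: real_le_rsqrt)
  ultimately show "cmod (B u v) \<le> 1 / Im w" unfolding c_def by simp
qed

lemma mod1: "a < (L::nat) \<Longrightarrow> ((a + 1) mod L + L - 1) mod L = a"
proof -
  assume a: "a < L"
  show ?thesis
  proof (cases "a + 1 < L")
    case True
    then have "(a + 1) mod L = a + 1" by (rule mod_less)
    then have "(a + 1) mod L + L - 1 = a + L" by simp
    then show ?thesis using a by simp
  next
    case False
    then have e: "a + 1 = L" using a by simp
    then have "(a + 1) mod L = 0" by simp
    then have "(a + 1) mod L + L - 1 = a" using e by simp
    then show ?thesis using a by simp
  qed
qed

lemma mod2: "b < (L::nat) \<Longrightarrow> ((b + L - 1) mod L + 1) mod L = b"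
proof -
  assume b: "b < L"
  show ?thesis
  proof (cases b)
    case 0
    have L0: "L > 0" using b by linarith
    have e1: "b + L - 1 = L - 1" using 0 by linarith
    have e2: "(L - 1) mod L = L - 1" using L0 by (intro mod_less) linarith
    have e3: "L - 1 + 1 = L" using L0 by linarith
    show ?thesis unfolding e1 e2 e3 using 0 by simp
  next
    case (Suc c)
    have e1: "b + L - 1 = c + L" using Suc by linarith
    have c: "c < L" using Suc b by linarith
    have e2: "(c + L) mod L = c" using c by simp
    have e3: "c + 1 = b" using Suc by linarith
    show ?thesis unfolding e1 e2 e3 using b by (rule mod_less)
  qed
qed

lemma step_sym:
  assumes x: "x \<in> torus d L" and y: "y \<in> torus d L" and i: "i < d"
  shows "(y = step_plus L i x) = (x = step_minus L i y)"
proof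
  have xi: "x i < L" and yi: "y i < L" using x y i by (auto simp: torus_def)
  assume yx: "y = step_plus L i x"
  then have "y i = (x i + 1) mod L" by (simp add: step_plus_def)
  then have "(y i + L - 1) mod L = x i" using mod1[OF xi] by simp
  show "x = step_minus L i y"
  proof (rule ext)
    fix j show "x j = step_minus L i y j"
      using yx \<open>(y i + L - 1) mod L = x i\<close> by (cases "j = i") (simp_all add: step_plus_def step_minus_def)
  qed
next
  have xi: "x i < L" and yi: "y i < L" using x y i by (auto simp: torus_def)
  assume xy: "x = step_minus L i y"
  then have "x i = (y i + L - 1) mod L" by (simp add: step_minus_def)
  then have "(x i + 1) mod L = y i" using mod2[OF yi] by simp
  show "y = step_plus L i x"
  proof (rule ext)
    fix j show "y j = step_plus L i x j"
      using xy \<open>(x i + 1) mod L = y i\<close> by (cases "j = i") (simp_all add: step_plus_def step_minus_def)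
  qed
qed

lemma cnj_of_bool: "cnj (of_bool b :: complex) = of_bool b"
  by (cases b) auto

lemma cnj_lap: "cnj (laplacian d L x y) = laplacian d L x y"
  by (simp add: laplacian_def cnj_sum cnj_of_bool)

lemma lap_sym:
  assumes x: "x \<in> torus d L" and y: "y \<in> torus d L"
  shows "laplacian d L x y = laplacian d L y x"
proof -
  have "(\<Sum>i<d. (of_bool (y = step_plus L i x) + of_bool (y = step_minus L i x)) :: complex)
      = (\<Sum>i<d. of_bool (x = step_plus L i y) + of_bool (x = step_minus L i y))"
  proof (rule sum.cong[OF refl])
    fix i assume "i \<in> {..<d}"
    then have i: "i < d" by simp
    show "(of_bool (y = step_plus L i x) + of_bool (y = step_minus L i x) :: complex)
      = of_bool (x = step_plus L i y) + of_bool (x = step_minus L i y)"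
      using step_sym[OF x y i] step_sym[OF y x i] by simp
  qed
  then show ?thesis using x y by (auto simp: laplacian_def)
qed

lemma lap_herm: "herm (torus d L) (laplacian d L)"
  unfolding herm_def using cnj_lap lap_sym by metis

lemma ham_herm: "herm (torus d L) (hamiltonian d L lam g)"
  unfolding herm_def hamiltonian_def
  using cnj_lap lap_sym by auto

locale resol =
  fixes d L :: nat and lam :: real and z :: complex
  assumes z: "Im z > 0"
begin

abbreviation "TT \<equiv> torus d L"
abbreviation "RR g \<equiv> resolvent d L lam g z"
abbreviation "AA g \<equiv> (\<lambda>x y. hamiltonian d L lam g x y - z * mat_id TT x y)"

lemma fin: "finite TT" by (rule finite_torus)

lemma R_inv: "mat_extensional TT (RR g)" "mat_mult TT (AA g) (RR g) = mat_id TT"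
        "mat_mult TT (RR g) (AA g) = mat_id TT"
  using herm_inverse[OF fin ham_herm z] unfolding resolvent_def by auto

lemma R_bound: "u \<in> TT \<Longrightarrow> v \<in> TT \<Longrightarrow> cmod (RR g u v) \<le> 1 / Im z"
  using col_bound(1)[OF fin ham_herm z R_inv(2)] by blast

lemma R_bound_all: "cmod (RR g u v) \<le> 1 / Im z"
proof (cases "u \<in> TT \<and> v \<in> TT")
  case True then show ?thesis using R_bound by blast
next
  case False
  then have "RR g u v = 0" using R_inv(1)[of g] by (auto simp: mat_extensional_def)
  then show ?thesis using z by simp
qed

lemma R_Im_diag: "v \<in> TT \<Longrightarrow> Im (RR g v v) \<ge> 0"
  using col_bound(2)[OF fin ham_herm z R_inv(2)] by blast

lemma inv_diff:
  assumes T: "finite T" and B': "mat_mult T B' A' = mat_id T" and C: "mat_mult T A C = mat_id T"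
    and u: "u \<in> T" and v: "v \<in> T" and x: "x \<in> T"
    and AA': "\<And>a b. a \<in> T \<Longrightarrow> b \<in> T \<Longrightarrow> A a b - A' a b = (if a = x \<and> b = x then \<delta> else 0)"
  shows "B' u v - C u v = B' u x * \<delta> * C x v"
proof -
  have "B' u v = mat_mult T B' (mat_mult T A C) u v"
    using C T u v by (simp add: mat_mult_id_right)
  moreover have "C u v = mat_mult T B' (mat_mult T A' C) u v"
    using mat_mult_assoc[OF T u v, of B' A' C] B' T u v by (simp add: mat_mult_id_left)
  moreover have "mat_mult T B' (mat_mult T A C) u v - mat_mult T B' (mat_mult T A' C) u v
      = (\<Sum>w\<in>T. B' u w * (\<Sum>w'\<in>T. (A w w' - A' w w') * C w' v))"
    using u v by (auto simp: mat_mult_def sum_subtractf[symmetric] algebra_simps sum_distrib_left intro!: sum.cong)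
  moreover have "\<dots> = (\<Sum>w\<in>T. if w = x then B' u x * \<delta> * C x v else 0)"
  proof (rule sum.cong[OF refl])
    fix w assume w: "w \<in> T"
    have "(\<Sum>w'\<in>T. (A w w' - A' w w') * C w' v) = (\<Sum>w'\<in>T. if w' = x then (if w = x then \<delta> else 0) * C x v else 0)"
      using w by (intro sum.cong) (auto simp: AA')
    also have "\<dots> = (if w = x then \<delta> else 0) * C x v" using T x by simp
    finally show "B' u w * (\<Sum>w'\<in>T. (A w w' - A' w w') * C w' v) = (if w = x then B' u x * \<delta> * C x v else 0)"
      by simp
  qed
  moreover have "\<dots> = B' u x * \<delta> * C x v" using T x by simp
  ultimately show ?thesis by simp
qed

lemma res_diff:
  assumes u: "u \<in> TT" and v: "v \<in> TT" and x: "x \<in> TT"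
  shows "RR (h(x:=s)) u v - RR (h(x:=t)) u v
       = RR (h(x:=s)) u x * complex_of_real (lam * (t - s)) * RR (h(x:=t)) x v"
proof (rule inv_diff[OF fin R_inv(3) R_inv(2) u v x])
  fix a b assume a: "a \<in> TT" and b: "b \<in> TT"
  show "AA (h(x := t)) a b - AA (h(x := s)) a b = (if a = x \<and> b = x then complex_of_real (lam * (t - s)) else 0)"
    using a b by (auto simp: hamiltonian_def algebra_simps)
qed

lemma res_lip:
  assumes u: "u \<in> TT" and v: "v \<in> TT" and x: "x \<in> TT"
  shows "cmod (RR (h(x:=s)) u v - RR (h(x:=t)) u v) \<le> \<bar>lam\<bar> * \<bar>t - s\<bar> / (Im z)\<^sup>2"
proof -
  have "cmod (RR (h(x:=s)) u v - RR (h(x:=t)) u v)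
      = cmod (RR (h(x:=s)) u x) * (\<bar>lam\<bar> * \<bar>t - s\<bar>) * cmod (RR (h(x:=t)) x v)"
    by (simp only: res_diff[OF u v x] norm_mult norm_of_real abs_mult mult.assoc)
  also have "\<dots> \<le> (1 / Im z) * (\<bar>lam\<bar> * \<bar>t - s\<bar>) * (1 / Im z)"
  proof -
    have k0: "0 \<le> \<bar>lam\<bar> * \<bar>t - s\<bar>" by simp
    have a: "cmod (RR (h(x:=s)) u x) * (\<bar>lam\<bar> * \<bar>t - s\<bar>) \<le> (1 / Im z) * (\<bar>lam\<bar> * \<bar>t - s\<bar>)"
      by (rule mult_right_mono[OF R_bound[OF u x] k0])
    show ?thesis by (rule mult_mono[OF a R_bound[OF x v]]) (use z k0 in auto)
  qed
  also have "\<dots> = \<bar>lam\<bar> * \<bar>t - s\<bar> / (Im z)\<^sup>2" using z by (simp add: power2_eq_square)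
  finally show ?thesis .
qed

lemma res_cont:
  assumes u: "u \<in> TT" and v: "v \<in> TT" and x: "x \<in> TT"
  shows "isCont (\<lambda>s. RR (h(x:=s)) u v) t"
proof -
  have "((\<lambda>s. RR (h(x:=s)) u v - RR (h(x:=t)) u v) \<longlongrightarrow> 0) (at t)"
  proof (rule Lim_null_comparison)
    show "\<forall>\<^sub>F s in at t. norm (RR (h(x:=s)) u v - RR (h(x:=t)) u v) \<le> \<bar>lam\<bar> * \<bar>t - s\<bar> / (Im z)\<^sup>2"
      using res_lip[OF u v x] by simp
    have "((\<lambda>s. (\<bar>lam\<bar> / (Im z)\<^sup>2) * \<bar>t - s\<bar>) \<longlongrightarrow> (\<bar>lam\<bar> / (Im z)\<^sup>2) * \<bar>t - t\<bar>) (at t)"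
      by (intro tendsto_intros)
    moreover have "(\<lambda>s. (\<bar>lam\<bar> / (Im z)\<^sup>2) * \<bar>t - s\<bar>) = (\<lambda>s. \<bar>lam\<bar> * \<bar>t - s\<bar> / (Im z)\<^sup>2)"
      by auto
    ultimately show "((\<lambda>s. \<bar>lam\<bar> * \<bar>t - s\<bar> / (Im z)\<^sup>2) \<longlongrightarrow> 0) (at t)" by simp
  qed
  then have "((\<lambda>s. RR (h(x:=s)) u v) \<longlongrightarrow> RR (h(x:=t)) u v) (at t)"
    by (simp add: Lim_null[symmetric])
  then show ?thesis unfolding isCont_def by simp
qed

end

lemma carat_vd:
  fixes f q :: "real \<Rightarrow> 'a::real_normed_vector"
  assumes fq: "\<And>s. f s - f t = (s - t) *\<^sub>R q s" and q: "isCont q t"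
  shows "(f has_vector_derivative q t) (at t)"
  unfolding has_vector_derivative_def has_derivative_at
proof
  show "bounded_linear (\<lambda>h. h *\<^sub>R q t)" by (rule bounded_linear_scaleR_left)
  have "((\<lambda>h. norm (q (t + h) - q t)) \<longlongrightarrow> 0) (at 0)"
  proof -
    have "((\<lambda>h. q (t + h)) \<longlongrightarrow> q t) (at 0)"
      using q unfolding isCont_def by (rule LIM_offset_zero)
    then have "((\<lambda>h. q (t + h) - q t) \<longlongrightarrow> 0) (at 0)"
      by (simp add: Lim_null[symmetric])
    then show ?thesis by (rule tendsto_norm_zero)
  qed
  moreover have "\<forall>\<^sub>F h in at 0. norm (q (t + h) - q t) = norm (f (t + h) - f t - h *\<^sub>R q t) / norm h"
  proof (rule eventually_mono[OF eventually_neq_at_within[of 0 0 UNIV]])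
    fix h :: real assume "h \<noteq> 0"
    have "f (t + h) - f t - h *\<^sub>R q t = h *\<^sub>R (q (t + h) - q t)"
      using fq[of "t + h"] by (simp add: algebra_simps)
    then show "norm (q (t + h) - q t) = norm (f (t + h) - f t - h *\<^sub>R q t) / norm h"
      using \<open>h \<noteq> 0\<close> by simp
  qed
  ultimately show "((\<lambda>h. norm (f (t + h) - f t - h *\<^sub>R q t) / norm h) \<longlongrightarrow> 0) (at 0)"
    by (rule Lim_transform_eventually)
qed

context resol begin

lemma res_deriv:
  assumes x: "x \<in> TT" and y: "y \<in> TT"
  shows "((\<lambda>s. RR (h(x:=s)) x y) has_vector_derivative
          (- complex_of_real lam * RR (h(x:=t)) x x * RR (h(x:=t)) x y)) (at t)"
proof -
  let ?q = "\<lambda>s. - complex_of_real lam * RR (h(x:=s)) x x * RR (h(x:=t)) x y"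
  have "((\<lambda>s. RR (h(x:=s)) x y) has_vector_derivative ?q t) (at t)"
  proof (rule carat_vd[where q = ?q])
    fix s
    show "RR (h(x:=s)) x y - RR (h(x:=t)) x y = (s - t) *\<^sub>R ?q s"
      by (simp add: res_diff[OF x y x] scaleR_conv_of_real algebra_simps)
    show "isCont ?q t"
      by (intro continuous_intros res_cont x y)
  qed
  then show ?thesis by simp
qed

end

abbreviation "NN \<equiv> density lborel std_normal_density"

lemma prob_NN: "prob_space NN"
  by (rule prob_space_normal_density) simp

lemma prob_gauss: "prob_space (gauss_field T)"
  unfolding gauss_field_def by (intro prob_space_PiM prob_NN)

lemma comp_meas: "a \<in> T \<Longrightarrow> (\<lambda>g. g a) \<in> borel_measurable (gauss_field T)"
proof -
  assume a: "a \<in> T"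
  have "(\<lambda>g. g a) \<in> measurable (gauss_field T) NN"
    unfolding gauss_field_def using measurable_component_singleton[OF a, of "\<lambda>_. NN"] by simp
  also have "measurable (gauss_field T) NN = borel_measurable (gauss_field T)"
    by (rule measurable_cong_sets) auto
  finally show ?thesis .
qed

lemma det_meas:
  fixes G :: "'a \<Rightarrow> complex mat"
  assumes G: "\<And>g. G g \<in> carrier_mat n n"
    and m: "\<And>i j. i < n \<Longrightarrow> j < n \<Longrightarrow> (\<lambda>g. G g $$ (i,j)) \<in> borel_measurable M"
  shows "(\<lambda>g. Determinant.det (G g)) \<in> borel_measurable M"
proof -
  have eq: "(\<lambda>g. Determinant.det (G g)) =
     (\<lambda>g. \<Sum>p\<in>{p. p permutes {0..<n}}. signof p * (\<Prod>i = 0..<n. G g $$ (i, p i)))"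
    using det_def'[OF G] by auto
  show ?thesis unfolding eq
  proof (intro borel_measurable_sum borel_measurable_times borel_measurable_const borel_measurable_prod)
    fix p i assume p: "p \<in> {p. p permutes {0..<n}}" and i: "i \<in> {0..<n}"
    then have "p i < n" using permutes_in_image[of p "{0..<n}" i] by auto
    then show "(\<lambda>g. G g $$ (i, p i)) \<in> borel_measurable M" using i m by auto
  qed
qed

lemma adj_meas:
  fixes G :: "'a \<Rightarrow> complex mat"
  assumes G: "\<And>g. G g \<in> carrier_mat n n"
    and m: "\<And>i j. i < n \<Longrightarrow> j < n \<Longrightarrow> (\<lambda>g. G g $$ (i,j)) \<in> borel_measurable M"
    and i: "i < n" and j: "j < n"
  shows "(\<lambda>g. adj_mat (G g) $$ (i,j)) \<in> borel_measurable M"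
proof -
  have eq: "(\<lambda>g. adj_mat (G g) $$ (i,j)) = (\<lambda>g. (-1)^(j+i) * Determinant.det (mat_delete (G g) j i))"
  proof (rule ext)
    fix g show "adj_mat (G g) $$ (i,j) = (-1)^(j+i) * Determinant.det (mat_delete (G g) j i)"
      using G[of g] i j by (simp add: adj_mat_def cofactor_def)
  qed
  have "(\<lambda>g. Determinant.det (mat_delete (G g) j i)) \<in> borel_measurable M"
  proof (rule det_meas[of _ "n - 1"])
    show "mat_delete (G g) j i \<in> carrier_mat (n - 1) (n - 1)" for g
      using mat_delete_carrier[OF G] by blast
    fix a b assume a: "a < n - 1" and b: "b < n - 1"
    have "(\<lambda>g. mat_delete (G g) j i $$ (a, b)) =
          (\<lambda>g. G g $$ (if a < j then a else Suc a, if b < i then b else Suc b))"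
    proof (rule ext)
      fix g show "mat_delete (G g) j i $$ (a, b) = G g $$ (if a < j then a else Suc a, if b < i then b else Suc b)"
        using G[of g] a b by (simp add: mat_delete_def)
    qed
    moreover have "(if a < j then a else Suc a) < n" "(if b < i then b else Suc b) < n"
      using a b by auto
    ultimately show "(\<lambda>g. mat_delete (G g) j i $$ (a, b)) \<in> borel_measurable M"
      using m by simp
  qed
  then show ?thesis unfolding eq by (intro borel_measurable_times borel_measurable_const)
qed

lemma inv_form_meas:
  fixes A :: "'a \<Rightarrow> op"
  assumes T: "finite T"
    and m: "\<And>u v. u \<in> T \<Longrightarrow> v \<in> T \<Longrightarrow> (\<lambda>g. A g u v) \<in> borel_measurable M"
  shows "(\<lambda>g. inv_form T (A g) x y) \<in> borel_measurable M"
proof (cases "x \<in> T \<and> y \<in> T")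
  case True
  have mM: "(\<lambda>g. toM T (A g) $$ (i,j)) \<in> borel_measurable M" if "i < card T" "j < card T" for i j
    using that m enum_in[OF T] by (simp add: toM_def)
  have "(\<lambda>g. adj_mat (toM T (A g)) $$ (idx T x, idx T y) / Determinant.det (toM T (A g))) \<in> borel_measurable M"
    by (intro borel_measurable_divide adj_meas[of _ "card T"] det_meas[of _ "card T"] toM_carrier mM
         idx_lt[OF T]) (use True in auto)
  then show ?thesis using True by (simp add: inv_form_def)
next
  case False
  then have "(\<lambda>g. inv_form T (A g) x y) = (\<lambda>g. 0)" by (auto simp: inv_form_def)
  then show ?thesis by simp
qed

context resol begin

lemma R_eq_inv_form: "RR g = inv_form TT (AA g)"
  unfolding resolvent_def by (rule mat_inv_form[OF fin herm_inj[OF fin ham_herm z]])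

lemma R_meas: "(\<lambda>g. RR g x y) \<in> borel_measurable (gauss_field TT)"
proof -
  have "(\<lambda>g. inv_form TT (AA g) x y) \<in> borel_measurable (gauss_field TT)"
  proof (rule inv_form_meas[OF fin])
    fix u v assume u: "u \<in> TT" and v: "v \<in> TT"
    have "(\<lambda>g. AA g u v) = (\<lambda>g. laplacian d L u v + (if u = v then complex_of_real (lam * g u) else 0) - z * mat_id TT u v)"
      using u v by (auto simp: hamiltonian_def)
    moreover have "(\<lambda>g. complex_of_real (lam * g u)) \<in> borel_measurable (gauss_field TT)"
      by (rule measurable_compose[OF comp_meas[OF u] borel_measurable_continuous_onI]) (intro continuous_intros)
    ultimately show "(\<lambda>g. AA g u v) \<in> borel_measurable (gauss_field TT)"
      by (cases "u = v") auto
  qed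
  then show ?thesis by (simp add: R_eq_inv_form)
qed

lemma R_integrable: "integrable (gauss_field TT) (\<lambda>g. RR g x y)"
proof -
  interpret prob_space "gauss_field TT" by (rule prob_gauss)
  show ?thesis
    by (rule integrable_const_bound[where B = "1 / Im z"]) (auto simp: R_bound_all R_meas)
qed

end

definition tshift :: "nat \<Rightarrow> (nat \<Rightarrow> nat) \<Rightarrow> (nat \<Rightarrow> nat) \<Rightarrow> (nat \<Rightarrow> nat)" where
  "tshift L a u = (\<lambda>i. (u i + a i) mod L)"

definition unshift :: "nat \<Rightarrow> (nat \<Rightarrow> nat) \<Rightarrow> (nat \<Rightarrow> nat) \<Rightarrow> (nat \<Rightarrow> nat)" where
  "unshift L a u = (\<lambda>i. (u i + (L - a i)) mod L)"

lemma torus_le: "a \<in> torus d L \<Longrightarrow> a i \<le> L"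
  by (cases "i < d") (auto simp: torus_def)

lemma torus_mod: "a \<in> torus d L \<Longrightarrow> a i mod L = a i"
  by (cases "i < d") (auto simp: torus_def)

lemma shift_in: "L \<ge> 1 \<Longrightarrow> u \<in> torus d L \<Longrightarrow> a \<in> torus d L \<Longrightarrow> tshift L a u \<in> torus d L"
  by (auto simp: torus_def tshift_def)

lemma unshift_in: "L \<ge> 1 \<Longrightarrow> u \<in> torus d L \<Longrightarrow> a \<in> torus d L \<Longrightarrow> unshift L a u \<in> torus d L"
  by (auto simp: torus_def unshift_def)

lemma unshift_shift:
  assumes "u \<in> torus d L" "a \<in> torus d L"
  shows "unshift L a (tshift L a u) = u"
proof (rule ext)
  fix i
  have "((u i + a i) mod L + (L - a i)) mod L = (u i + a i + (L - a i)) mod L"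
    by (simp add: mod_add_left_eq)
  also have "u i + a i + (L - a i) = u i + L" using torus_le[OF assms(2), of i] by simp
  also have "(u i + L) mod L = u i" using torus_mod[OF assms(1), of i] by simp
  finally show "unshift L a (tshift L a u) i = u i" by (simp add: tshift_def unshift_def)
qed

lemma shift_unshift:
  assumes "u \<in> torus d L" "a \<in> torus d L"
  shows "tshift L a (unshift L a u) = u"
proof (rule ext)
  fix i
  have "((u i + (L - a i)) mod L + a i) mod L = (u i + (L - a i) + a i) mod L"
    by (simp add: mod_add_left_eq)
  also have "u i + (L - a i) + a i = u i + L" using torus_le[OF assms(2), of i] by simp
  also have "(u i + L) mod L = u i" using torus_mod[OF assms(1), of i] by simp
  finally show "tshift L a (unshift L a u) i = u i" by (simp add: tshift_def unshift_def)
qed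

lemma shift_bij: "L \<ge> 1 \<Longrightarrow> a \<in> torus d L \<Longrightarrow> bij_betw (tshift L a) (torus d L) (torus d L)"
  by (rule bij_betwI[where g = "unshift L a"]) (auto simp: shift_in unshift_in unshift_shift shift_unshift)

lemma shift_inj: "L \<ge> 1 \<Longrightarrow> a \<in> torus d L \<Longrightarrow> u \<in> torus d L \<Longrightarrow> v \<in> torus d L \<Longrightarrow>
   (tshift L a u = tshift L a v) = (u = v)"
  by (metis unshift_shift)

lemma shift_origin: "a \<in> torus d L \<Longrightarrow> tshift L a origin = a"
  by (auto simp: tshift_def origin_def torus_mod)

lemma step_plus_in: "u \<in> torus d L \<Longrightarrow> i < d \<Longrightarrow> step_plus L i u \<in> torus d L"
proof -
  assume u: "u \<in> torus d L" and i: "i < d"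
  then have "L > 0" by (auto simp: torus_def)
  then show ?thesis using u i by (auto simp: torus_def step_plus_def)
qed

lemma step_minus_in: "u \<in> torus d L \<Longrightarrow> i < d \<Longrightarrow> step_minus L i u \<in> torus d L"
proof -
  assume u: "u \<in> torus d L" and i: "i < d"
  then have "L > 0" by (auto simp: torus_def)
  then show ?thesis using u i by (auto simp: torus_def step_minus_def)
qed

lemma shift_step_plus: "tshift L a (step_plus L i u) = step_plus L i (tshift L a u)"
proof (rule ext)
  fix j show "tshift L a (step_plus L i u) j = step_plus L i (tshift L a u) j"
  proof (cases "j = i")
    case True
    have "((u i + 1) mod L + a i) mod L = (u i + 1 + a i) mod L" by (rule mod_add_left_eq)
    moreover have "((u i + a i) mod L + 1) mod L = (u i + a i + 1) mod L" by (rule mod_add_left_eq)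
    ultimately show ?thesis using True by (simp add: tshift_def step_plus_def add_ac mod_Suc_eq)
  qed (simp add: tshift_def step_plus_def)
qed

lemma shift_step_minus: "L \<ge> 1 \<Longrightarrow> tshift L a (step_minus L i u) = step_minus L i (tshift L a u)"
proof (rule ext)
  assume L: "L \<ge> 1"
  fix j show "tshift L a (step_minus L i u) j = step_minus L i (tshift L a u) j"
  proof (cases "j = i")
    case True
    have e1: "u i + L - 1 = u i + (L - 1)" using L by simp
    have e2: "(u i + a i) mod L + L - 1 = (u i + a i) mod L + (L - 1)" using L by simp
    have "((u i + (L - 1)) mod L + a i) mod L = (u i + (L - 1) + a i) mod L" by (simp add: mod_add_left_eq)
    moreover have "((u i + a i) mod L + (L - 1)) mod L = (u i + a i + (L - 1)) mod L" by (simp add: mod_add_left_eq)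
    ultimately show ?thesis using True e1 e2 by (simp add: tshift_def step_minus_def add_ac)
  qed (simp add: tshift_def step_minus_def)
qed

lemma lap_shift:
  assumes L: "L \<ge> 1" and a: "a \<in> torus d L" and u: "u \<in> torus d L" and v: "v \<in> torus d L"
  shows "laplacian d L (tshift L a u) (tshift L a v) = laplacian d L u v"
proof -
  have su: "tshift L a u \<in> torus d L" and sv: "tshift L a v \<in> torus d L"
    using shift_in[OF L] u v a by auto
  have "(\<Sum>i<d. (of_bool (tshift L a v = step_plus L i (tshift L a u)) + of_bool (tshift L a v = step_minus L i (tshift L a u))) :: complex)
      = (\<Sum>i<d. of_bool (v = step_plus L i u) + of_bool (v = step_minus L i u))"
  proof (rule sum.cong[OF refl])
    fix i assume "i \<in> {..<d}" then have i: "i < d" by simp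
    have "(tshift L a v = step_plus L i (tshift L a u)) = (v = step_plus L i u)"
      unfolding shift_step_plus[symmetric] by (rule shift_inj[OF L a v step_plus_in[OF u i]])
    moreover have "(tshift L a v = step_minus L i (tshift L a u)) = (v = step_minus L i u)"
      unfolding shift_step_minus[OF L, symmetric] by (rule shift_inj[OF L a v step_minus_in[OF u i]])
    ultimately show "(of_bool (tshift L a v = step_plus L i (tshift L a u)) + of_bool (tshift L a v = step_minus L i (tshift L a u)) :: complex)
      = of_bool (v = step_plus L i u) + of_bool (v = step_minus L i u)" by simp
  qed
  moreover have "(tshift L a u = tshift L a v) = (u = v)" by (rule shift_inj[OF L a u v])
  ultimately show ?thesis using su sv u v by (simp add: laplacian_def)
qed

locale resolL = resol +
  assumes L: "L \<ge> 1"
begin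

definition SS :: "(nat \<Rightarrow> nat) \<Rightarrow> ((nat \<Rightarrow> nat) \<Rightarrow> real) \<Rightarrow> ((nat \<Rightarrow> nat) \<Rightarrow> real)" where
  "SS a g = (\<lambda>n\<in>TT. g (tshift L a n))"

lemma AA_shift:
  assumes a: "a \<in> TT" and u: "u \<in> TT" and v: "v \<in> TT"
  shows "AA (SS a g) u v = AA g (tshift L a u) (tshift L a v)"
proof -
  have su: "tshift L a u \<in> TT" and sv: "tshift L a v \<in> TT"
    using shift_in[OF L] u v a by auto
  have inj: "(tshift L a u = tshift L a v) = (u = v)" by (rule shift_inj[OF L a u v])
  show ?thesis using su sv u v inj lap_shift[OF L a u v]
    by (simp add: hamiltonian_def mat_id_def SS_def)
qed

lemma R_shift:
  assumes a: "a \<in> TT" and u: "u \<in> TT" and v: "v \<in> TT"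
  shows "RR (SS a g) u v = RR g (tshift L a u) (tshift L a v)"
proof -
  define B where "B = (\<lambda>u v. if u \<in> TT \<and> v \<in> TT then RR g (tshift L a u) (tshift L a v) else 0)"
  have bij: "bij_betw (tshift L a) TT TT" by (rule shift_bij[OF L a])
  have sin: "\<And>u. u \<in> TT \<Longrightarrow> tshift L a u \<in> TT" using shift_in[OF L] a by auto
  have sinj: "\<And>u v. u \<in> TT \<Longrightarrow> v \<in> TT \<Longrightarrow> (tshift L a u = tshift L a v) = (u = v)"
    using shift_inj[OF L a] by auto
  have "mat_inv TT (AA (SS a g)) = B"
  proof (rule mat_inv_eq[OF fin])
    show "mat_extensional TT B" by (simp add: B_def mat_extensional_def)
    show "mat_mult TT (AA (SS a g)) B = mat_id TT"
    proof (intro ext)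
      fix x y show "mat_mult TT (AA (SS a g)) B x y = mat_id TT x y"
      proof (cases "x \<in> TT \<and> y \<in> TT")
        case True
        have "mat_mult TT (AA (SS a g)) B x y = (\<Sum>w\<in>TT. AA g (tshift L a x) (tshift L a w) * RR g (tshift L a w) (tshift L a y))"
          using True by (auto simp: mat_mult_def B_def AA_shift[OF a] intro!: sum.cong)
        also have "\<dots> = (\<Sum>w\<in>TT. AA g (tshift L a x) w * RR g w (tshift L a y))"
          by (rule sum.reindex_bij_betw[OF bij])
        also have "\<dots> = mat_mult TT (AA g) (RR g) (tshift L a x) (tshift L a y)"
          using True sin by (simp add: mat_mult_def)
        also have "\<dots> = mat_id TT (tshift L a x) (tshift L a y)" by (simp only: R_inv)
        also have "\<dots> = mat_id TT x y" using True sin sinj by (simp add: mat_id_def)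
        finally show ?thesis .
      qed (auto simp: mat_mult_def mat_id_def)
    qed
    show "mat_mult TT B (AA (SS a g)) = mat_id TT"
    proof (intro ext)
      fix x y show "mat_mult TT B (AA (SS a g)) x y = mat_id TT x y"
      proof (cases "x \<in> TT \<and> y \<in> TT")
        case True
        have "mat_mult TT B (AA (SS a g)) x y = (\<Sum>w\<in>TT. RR g (tshift L a x) (tshift L a w) * AA g (tshift L a w) (tshift L a y))"
          using True by (auto simp: mat_mult_def B_def AA_shift[OF a] intro!: sum.cong)
        also have "\<dots> = (\<Sum>w\<in>TT. RR g (tshift L a x) w * AA g w (tshift L a y))"
          by (rule sum.reindex_bij_betw[OF bij])
        also have "\<dots> = mat_mult TT (RR g) (AA g) (tshift L a x) (tshift L a y)"
          using True sin by (simp add: mat_mult_def)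
        also have "\<dots> = mat_id TT (tshift L a x) (tshift L a y)" by (simp only: R_inv)
        also have "\<dots> = mat_id TT x y" using True sin sinj by (simp add: mat_id_def)
        finally show ?thesis .
      qed (auto simp: mat_mult_def mat_id_def)
    qed
  qed
  then show ?thesis using u v unfolding resolvent_def B_def by simp
qed

lemma SS_meas: "a \<in> TT \<Longrightarrow> SS a \<in> measurable (gauss_field TT) (gauss_field TT)"
  unfolding SS_def gauss_field_def
  by (intro measurable_restrict measurable_component_singleton shift_in[OF L]) auto

lemma gauss_shift: "a \<in> TT \<Longrightarrow> distr (gauss_field TT) (gauss_field TT) (SS a) = gauss_field TT"
  unfolding SS_def gauss_field_def
  using distr_PiM_reindex[of TT "\<lambda>_. NN" "tshift L a" TT] prob_NN shift_bij[OF L, of a]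
  by (auto simp: bij_betw_def shift_in[OF L])

lemma ER_diag:
  assumes a: "a \<in> TT"
  shows "(\<integral>g. RR g a a \<partial>gauss_field TT) = (\<integral>g. RR g origin origin \<partial>gauss_field TT)"
proof -
  have o: "origin \<in> TT" by (rule origin_torus[OF L])
  have "(\<integral>g. RR g origin origin \<partial>gauss_field TT) = (\<integral>g. RR g origin origin \<partial>distr (gauss_field TT) (gauss_field TT) (SS a))"
    using gauss_shift[OF a] by simp
  also have "\<dots> = (\<integral>g. RR (SS a g) origin origin \<partial>gauss_field TT)"
    by (rule integral_distr[OF SS_meas[OF a] R_meas])
  also have "\<dots> = (\<integral>g. RR g a a \<partial>gauss_field TT)"
    using R_shift[OF a o o] shift_origin[OF a] by simp
  finally show ?thesis by simp
qed

end

lemma phi_eq: "std_normal_density = (\<lambda>t. exp (- t\<^sup>2 / 2) / sqrt (2 * pi))"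
  by (rule ext) (simp add: std_normal_density_def)

lemma phi_top: "(std_normal_density \<longlongrightarrow> 0) at_top"
  unfolding phi_eq by real_asymp

lemma phi_bot: "(std_normal_density \<longlongrightarrow> 0) at_bot"
  unfolding phi_eq by real_asymp

lemma phi_deriv: "(std_normal_density has_real_derivative (- t * std_normal_density t)) (at t)"
  unfolding phi_eq by (auto intro!: derivative_eq_intros simp: field_simps power2_eq_square)

lemma phi_cont: "isCont std_normal_density t"
  by (rule DERIV_isCont[OF phi_deriv])

lemma phi_meas: "std_normal_density \<in> borel_measurable borel"
  by (intro borel_measurable_continuous_onI continuous_at_imp_continuous_on ballI phi_cont)

lemma lim0_bound:
  fixes h :: "real \<Rightarrow> 'a::real_normed_vector"
  assumes g: "(g \<longlongrightarrow> 0) F" and b: "\<And>t. norm (h t) \<le> C * g t"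
  shows "(h \<longlongrightarrow> 0) F"
proof (rule Lim_null_comparison)
  show "\<forall>\<^sub>F t in F. norm (h t) \<le> C * g t" using b by simp
  show "((\<lambda>t. C * g t) \<longlongrightarrow> 0) F" using tendsto_mult_right_zero[OF g] by simp
qed

lemma gauss_ibp_1d:
  fixes f f' :: "real \<Rightarrow> complex"
  assumes df: "\<And>t. (f has_vector_derivative f' t) (at t)"
    and cf': "\<And>t. isCont f' t"
    and bf: "\<And>t. cmod (f t) \<le> C" and bf': "\<And>t. cmod (f' t) \<le> C'"
  shows "(\<integral>t. complex_of_real t * f t \<partial>NN) = (\<integral>t. f' t \<partial>NN)"
proof -
  let ?p = std_normal_density
  have cf: "isCont f t" for t using has_vector_derivative_continuous[OF df] .
  have mf: "f \<in> borel_measurable borel"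
    by (intro borel_measurable_continuous_onI continuous_at_imp_continuous_on ballI cf)
  have mf': "f' \<in> borel_measurable borel"
    by (intro borel_measurable_continuous_onI continuous_at_imp_continuous_on ballI cf')
  have C0: "C \<ge> 0" using bf[of 0] by (meson norm_ge_zero order_trans)
  have C'0: "C' \<ge> 0" using bf'[of 0] by (meson norm_ge_zero order_trans)
  have int0: "integrable lborel ?p" using integrable_std_normal_moment_abs[of 0] by simp
  have int1: "integrable lborel (\<lambda>t. ?p t * \<bar>t\<bar>)" using integrable_std_normal_moment_abs[of 1] by simp
  have iA: "integrable lborel (\<lambda>t. ?p t *\<^sub>R f' t)"
  proof (rule Bochner_Integration.integrable_bound[where f = "\<lambda>t. C' * ?p t"])
    show "integrable lborel (\<lambda>t. C' * ?p t)" using int0 by simp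
    show "(\<lambda>t. ?p t *\<^sub>R f' t) \<in> borel_measurable lborel"
      using phi_meas mf' by simp
    show "AE t in lborel. norm (?p t *\<^sub>R f' t) \<le> norm (C' * ?p t)"
    proof (intro AE_I2)
      fix t
      have "norm (?p t *\<^sub>R f' t) = ?p t * cmod (f' t)" by simp
      also have "\<dots> \<le> ?p t * C'" by (rule mult_left_mono[OF bf']) simp
      also have "\<dots> = norm (C' * ?p t)" using C'0 by (simp add: abs_mult)
      finally show "norm (?p t *\<^sub>R f' t) \<le> norm (C' * ?p t)" .
    qed
  qed
  have iB: "integrable lborel (\<lambda>t. (t * ?p t) *\<^sub>R f t)"
  proof (rule Bochner_Integration.integrable_bound[where f = "\<lambda>t. C * (?p t * \<bar>t\<bar>)"])
    show "integrable lborel (\<lambda>t. C * (?p t * \<bar>t\<bar>))" using int1 by simp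
    show "(\<lambda>t. (t * ?p t) *\<^sub>R f t) \<in> borel_measurable lborel"
      using phi_meas mf by simp
    show "AE t in lborel. norm ((t * ?p t) *\<^sub>R f t) \<le> norm (C * (?p t * \<bar>t\<bar>))"
    proof (intro AE_I2)
      fix t
      have "norm ((t * ?p t) *\<^sub>R f t) = (?p t * \<bar>t\<bar>) * cmod (f t)" by (simp add: abs_mult)
      also have "\<dots> \<le> (?p t * \<bar>t\<bar>) * C" by (rule mult_left_mono[OF bf]) simp
      also have "\<dots> = norm (C * (?p t * \<bar>t\<bar>))" using C0 by (simp add: abs_mult)
      finally show "norm ((t * ?p t) *\<^sub>R f t) \<le> norm (C * (?p t * \<bar>t\<bar>))" .
    qed
  qed
  define F' where "F' t = ?p t *\<^sub>R f' t - (t * ?p t) *\<^sub>R f t" for t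
  have "(LBINT t=-\<infinity>..\<infinity>. F' t) = 0 - 0"
  proof (rule interval_integral_FTC_integrable[where F = "\<lambda>t. ?p t *\<^sub>R f t"])
    show "- \<infinity> < (\<infinity>::ereal)" by simp
    fix x :: real
    show "((\<lambda>t. ?p t *\<^sub>R f t) has_vector_derivative F' x) (at x)"
      using has_vector_derivative_scaleR[OF phi_deriv df, of x]
      by (simp add: F'_def algebra_simps)
    show "isCont F' x" unfolding F'_def
      by (intro continuous_intros phi_cont cf cf')
  next
    show "set_integrable lborel (einterval (- \<infinity>) \<infinity>) F'"
      unfolding set_integrable_def einterval_eq_UNIV F'_def using iA iB by simp
    show "(((\<lambda>t. ?p t *\<^sub>R f t) \<circ> real_of_ereal) \<longlongrightarrow> 0) (at_right (- \<infinity>))"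
      unfolding ereal_tendsto_simps1
      by (rule lim0_bound[OF phi_bot, where C = C]) (use bf in \<open>auto simp: mult.commute[of C] intro!: mult_left_mono\<close>)
    show "(((\<lambda>t. ?p t *\<^sub>R f t) \<circ> real_of_ereal) \<longlongrightarrow> 0) (at_left \<infinity>)"
      unfolding ereal_tendsto_simps1
      by (rule lim0_bound[OF phi_top, where C = C]) (use bf in \<open>auto simp: mult.commute[of C] intro!: mult_left_mono\<close>)
  qed
  then have "(\<integral>t. F' t \<partial>lborel) = 0"
    by (simp add: interval_lebesgue_integral_def einterval_eq_UNIV set_lebesgue_integral_def)
  then have eq: "(\<integral>t. ?p t *\<^sub>R f' t \<partial>lborel) = (\<integral>t. (t * ?p t) *\<^sub>R f t \<partial>lborel)"
    unfolding F'_def using Bochner_Integration.integral_diff[OF iA iB] by simp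
  have "(\<integral>t. complex_of_real t * f t \<partial>NN) = (\<integral>t. ?p t *\<^sub>R (complex_of_real t * f t) \<partial>lborel)"
    by (rule integral_density) (use mf phi_meas in auto)
  also have "\<dots> = (\<integral>t. (t * ?p t) *\<^sub>R f t \<partial>lborel)"
    by (rule Bochner_Integration.integral_cong) (auto simp: scaleR_conv_of_real)
  also have "\<dots> = (\<integral>t. ?p t *\<^sub>R f' t \<partial>lborel)" using eq by simp
  also have "\<dots> = (\<integral>t. f' t \<partial>NN)"
    by (rule integral_density[symmetric]) (use mf' phi_meas in auto)
  finally show ?thesis .
qed

lemma gauss_ibp:
  fixes F F' :: "((nat \<Rightarrow> nat) \<Rightarrow> real) \<Rightarrow> complex"
  assumes T: "finite T" and x: "x \<in> T"
    and mF: "F \<in> borel_measurable (gauss_field T)" and mF': "F' \<in> borel_measurable (gauss_field T)"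
    and bF: "\<And>g. cmod (F g) \<le> C" and bF': "\<And>g. cmod (F' g) \<le> C'"
    and dF: "\<And>h t. ((\<lambda>s. F (h(x:=s))) has_vector_derivative F' (h(x:=t))) (at t)"
    and cF': "\<And>h t. isCont (\<lambda>s. F' (h(x:=s))) t"
  shows "(\<integral>g. complex_of_real (g x) * F g \<partial>gauss_field T) = (\<integral>g. F' g \<partial>gauss_field T)"
proof -
  interpret product_sigma_finite "\<lambda>_::nat\<Rightarrow>nat. NN"
    unfolding product_sigma_finite_def using prob_space_imp_sigma_finite[OF prob_NN] by simp
  interpret P: prob_space "gauss_field T" by (rule prob_gauss)
  have Teq: "gauss_field T = PiM (insert x (T - {x})) (\<lambda>_. NN)"
    using x by (simp add: gauss_field_def insert_absorb)
  have T': "finite (T - {x})" "x \<notin> T - {x}" using T by auto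
  have C0: "C \<ge> 0" using bF[of undefined] by (meson norm_ge_zero order_trans)
  have int2: "integrable (gauss_field T) F'"
    by (rule P.integrable_const_bound[where B = C']) (use bF' mF' in auto)
  have mx: "(\<lambda>g. g x) \<in> measurable (gauss_field T) NN"
    unfolding gauss_field_def using measurable_component_singleton[OF x, of "\<lambda>_. NN"] by simp
  have "integrable NN (\<lambda>t. \<bar>t\<bar>)"
    by (subst integrable_density) (use integrable_std_normal_moment_abs[of 1] in auto)
  then have "integrable (distr (gauss_field T) NN (\<lambda>g. g x)) (\<lambda>t. \<bar>t\<bar>)"
    unfolding gauss_field_def using distr_PiM_component[of T "\<lambda>_. NN" x] x prob_NN by simp
  then have iabs: "integrable (gauss_field T) (\<lambda>g. \<bar>g x\<bar>)"
    by (subst (asm) integrable_distr_eq[OF mx]) auto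
  have int1: "integrable (gauss_field T) (\<lambda>g. complex_of_real (g x) * F g)"
  proof (rule Bochner_Integration.integrable_bound[where f = "\<lambda>g. C * \<bar>g x\<bar>"])
    show "integrable (gauss_field T) (\<lambda>g. C * \<bar>g x\<bar>)" using iabs by simp
    show "(\<lambda>g. complex_of_real (g x) * F g) \<in> borel_measurable (gauss_field T)"
      using comp_meas[OF x] mF by (intro borel_measurable_times measurable_compose[OF comp_meas[OF x] borel_measurable_continuous_onI]) (auto intro: continuous_intros)
    show "AE g in gauss_field T. norm (complex_of_real (g x) * F g) \<le> norm (C * \<bar>g x\<bar>)"
    proof (intro AE_I2)
      fix g :: "(nat \<Rightarrow> nat) \<Rightarrow> real"
      have "norm (complex_of_real (g x) * F g) = \<bar>g x\<bar> * cmod (F g)" by (simp add: norm_mult)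
      also have "\<dots> \<le> \<bar>g x\<bar> * C" by (rule mult_left_mono[OF bF]) simp
      also have "\<dots> = norm (C * \<bar>g x\<bar>)" using C0 by (simp add: abs_mult)
      finally show "norm (complex_of_real (g x) * F g) \<le> norm (C * \<bar>g x\<bar>)" .
    qed
  qed
  have "(\<integral>g. complex_of_real (g x) * F g \<partial>gauss_field T)
      = (\<integral>h. (\<integral>t. complex_of_real ((h(x:=t)) x) * F (h(x:=t)) \<partial>NN) \<partial>PiM (T - {x}) (\<lambda>_. NN))"
    unfolding Teq by (rule product_integral_insert[OF T']) (use int1 Teq in simp)
  also have "\<dots> = (\<integral>h. (\<integral>t. F' (h(x:=t)) \<partial>NN) \<partial>PiM (T - {x}) (\<lambda>_. NN))"
  proof (rule Bochner_Integration.integral_cong[OF refl])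
    fix h
    show "(\<integral>t. complex_of_real ((h(x:=t)) x) * F (h(x:=t)) \<partial>NN) = (\<integral>t. F' (h(x:=t)) \<partial>NN)"
      using gauss_ibp_1d[of "\<lambda>s. F (h(x:=s))" "\<lambda>t. F' (h(x:=t))" C C'] dF cF' bF bF' by simp
  qed
  also have "\<dots> = (\<integral>g. F' g \<partial>gauss_field T)"
    unfolding Teq by (rule product_integral_insert[OF T', symmetric]) (use int2 Teq in simp)
  finally show ?thesis .
qed

lemma gauss_x_int:
  fixes F :: "((nat \<Rightarrow> nat) \<Rightarrow> real) \<Rightarrow> complex"
  assumes T: "finite T" and x: "x \<in> T"
    and mF: "F \<in> borel_measurable (gauss_field T)"
    and bF: "\<And>g. cmod (F g) \<le> C"
  shows "integrable (gauss_field T) (\<lambda>g. complex_of_real (g x) * F g)"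
proof -
  have C0: "C \<ge> 0" using bF[of undefined] by (meson norm_ge_zero order_trans)
  have mx: "(\<lambda>g. g x) \<in> measurable (gauss_field T) NN"
    unfolding gauss_field_def using measurable_component_singleton[OF x, of "\<lambda>_. NN"] by simp
  have "integrable NN (\<lambda>t. \<bar>t\<bar>)"
    by (subst integrable_density) (use integrable_std_normal_moment_abs[of 1] in auto)
  then have "integrable (distr (gauss_field T) NN (\<lambda>g. g x)) (\<lambda>t. \<bar>t\<bar>)"
    unfolding gauss_field_def using distr_PiM_component[of T "\<lambda>_. NN" x] x prob_NN by simp
  then have iabs: "integrable (gauss_field T) (\<lambda>g. \<bar>g x\<bar>)"
    by (subst (asm) integrable_distr_eq[OF mx]) auto
  show ?thesis
  proof (rule Bochner_Integration.integrable_bound[where f = "\<lambda>g. C * \<bar>g x\<bar>"])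
    show "integrable (gauss_field T) (\<lambda>g. C * \<bar>g x\<bar>)" using iabs by simp
    show "(\<lambda>g. complex_of_real (g x) * F g) \<in> borel_measurable (gauss_field T)"
      using comp_meas[OF x] mF by (intro borel_measurable_times measurable_compose[OF comp_meas[OF x] borel_measurable_continuous_onI]) (auto intro: continuous_intros)
    show "AE g in gauss_field T. norm (complex_of_real (g x) * F g) \<le> norm (C * \<bar>g x\<bar>)"
    proof (intro AE_I2)
      fix g :: "(nat \<Rightarrow> nat) \<Rightarrow> real"
      have "norm (complex_of_real (g x) * F g) = \<bar>g x\<bar> * cmod (F g)" by (simp add: norm_mult)
      also have "\<dots> \<le> \<bar>g x\<bar> * C" by (rule mult_left_mono[OF bF]) simp
      also have "\<dots> = norm (C * \<bar>g x\<bar>)" using C0 by (simp add: abs_mult)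
      finally show "norm (complex_of_real (g x) * F g) \<le> norm (C * \<bar>g x\<bar>)" .
    qed
  qed
qed

context resolL begin

abbreviation "MU \<equiv> gauss_field TT"
abbreviation "ERR \<equiv> expect_mat TT (\<lambda>g. RR g)"
abbreviation "TH \<equiv> ERR origin origin"

lemma ERR_eq: "ERR u v = (\<integral>g. RR g u v \<partial>MU)"
  by (simp add: expect_mat_def)

lemma TH_Im: "Im TH \<ge> 0"
proof -
  have "Im TH = (\<integral>g. Im (RR g origin origin) \<partial>MU)"
    unfolding ERR_eq using integral_bounded_linear[OF bounded_linear_Im R_integrable] by simp
  also have "\<dots> \<ge> 0"
    by (rule integral_nonneg_AE) (use R_Im_diag origin_torus[OF L] in auto)
  finally show ?thesis .
qed

lemma RR_bound2: "cmod (RR g u v) * cmod (RR g u' v') \<le> (1 / Im z) * (1 / Im z)"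
  by (rule mult_mono[OF R_bound_all R_bound_all]) (use z in auto)

lemma RR_int2: "integrable MU (\<lambda>g. RR g u v * RR g u' v')"
proof -
  interpret P: prob_space MU by (rule prob_gauss)
  show ?thesis
  proof (rule P.integrable_const_bound[where B = "(1 / Im z) * (1 / Im z)"])
    show "AE g in MU. norm (RR g u v * RR g u' v') \<le> (1 / Im z) * (1 / Im z)"
      using RR_bound2 by (simp add: norm_mult)
    show "(\<lambda>g. RR g u v * RR g u' v') \<in> borel_measurable MU"
      by (intro borel_measurable_times R_meas)
  qed
qed

lemma ibp_R:
  assumes x: "x \<in> TT" and y: "y \<in> TT"
  shows "(\<integral>g. complex_of_real (g x) * RR g x y \<partial>MU)
       = - complex_of_real lam * (\<integral>g. RR g x x * RR g x y \<partial>MU)"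
proof -
  have "(\<integral>g. complex_of_real (g x) * RR g x y \<partial>MU)
      = (\<integral>g. - complex_of_real lam * RR g x x * RR g x y \<partial>MU)"
  proof (rule gauss_ibp[OF fin x, where C = "1 / Im z" and C' = "\<bar>lam\<bar> * ((1 / Im z) * (1 / Im z))"])
    show "(\<lambda>g. RR g x y) \<in> borel_measurable MU" by (rule R_meas)
    show "(\<lambda>g. - complex_of_real lam * RR g x x * RR g x y) \<in> borel_measurable MU"
      by (intro borel_measurable_times borel_measurable_const R_meas)
    show "cmod (RR g x y) \<le> 1 / Im z" for g by (rule R_bound_all)
    show "cmod (- complex_of_real lam * RR g x x * RR g x y) \<le> \<bar>lam\<bar> * ((1 / Im z) * (1 / Im z))" for g
      using mult_left_mono[OF RR_bound2[of g x x x y], of "\<bar>lam\<bar>"] by (simp add: norm_mult mult.assoc)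
    show "((\<lambda>s. RR (h(x:=s)) x y) has_vector_derivative - complex_of_real lam * RR (h(x:=t)) x x * RR (h(x:=t)) x y) (at t)" for h t
      by (rule res_deriv[OF x y])
    show "isCont (\<lambda>s. - complex_of_real lam * RR (h(x:=s)) x x * RR (h(x:=s)) x y) t" for h t
      by (intro continuous_intros res_cont x y)
  qed
  also have "\<dots> = - complex_of_real lam * (\<integral>g. RR g x x * RR g x y \<partial>MU)"
    by (simp add: mult.assoc)
  finally show ?thesis .
qed

definition "L0 u w = laplacian d L u w - z * mat_id TT u w"

lemma pointwise:
  assumes x: "x \<in> TT" and y: "y \<in> TT"
  shows "(\<Sum>w\<in>TT. L0 x w * RR g w y) + complex_of_real lam * (complex_of_real (g x) * RR g x y) = mat_id TT x y"
proof -
  have "mat_mult TT (AA g) (RR g) x y = mat_id TT x y" by (simp only: R_inv)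
  moreover have "mat_mult TT (AA g) (RR g) x y = (\<Sum>w\<in>TT. L0 x w * RR g w y + (if w = x then complex_of_real (lam * g x) * RR g x y else 0))"
    using x y by (auto simp: mat_mult_def hamiltonian_def L0_def algebra_simps intro!: sum.cong)
  moreover have "\<dots> = (\<Sum>w\<in>TT. L0 x w * RR g w y) + complex_of_real (lam * g x) * RR g x y"
    using x fin by (simp add: sum.distrib)
  ultimately show ?thesis by (simp add: mult.assoc)
qed

lemma key:
  assumes x: "x \<in> TT" and y: "y \<in> TT"
  shows "(\<Sum>w\<in>TT. L0 x w * ERR w y) - complex_of_real (lam\<^sup>2) * (\<integral>g. RR g x x * RR g x y \<partial>MU) = mat_id TT x y"
proof -
  interpret P: prob_space MU by (rule prob_gauss)
  have i1: "integrable MU (\<lambda>g. \<Sum>w\<in>TT. L0 x w * RR g w y)"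
    by (intro Bochner_Integration.integrable_sum integrable_mult_right R_integrable)
  have i2: "integrable MU (\<lambda>g. complex_of_real lam * (complex_of_real (g x) * RR g x y))"
    by (intro integrable_mult_right gauss_x_int[OF fin x R_meas R_bound_all])
  have "(\<integral>g. (\<Sum>w\<in>TT. L0 x w * RR g w y) + complex_of_real lam * (complex_of_real (g x) * RR g x y) \<partial>MU) = mat_id TT x y"
    using pointwise[OF x y] P.prob_space by simp
  moreover have "(\<integral>g. (\<Sum>w\<in>TT. L0 x w * RR g w y) + complex_of_real lam * (complex_of_real (g x) * RR g x y) \<partial>MU)
      = (\<integral>g. (\<Sum>w\<in>TT. L0 x w * RR g w y) \<partial>MU) + complex_of_real lam * (\<integral>g. complex_of_real (g x) * RR g x y \<partial>MU)"
    using Bochner_Integration.integral_add[OF i1 i2] by simp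
  moreover have "(\<integral>g. (\<Sum>w\<in>TT. L0 x w * RR g w y) \<partial>MU) = (\<Sum>w\<in>TT. L0 x w * ERR w y)"
    by (subst Bochner_Integration.integral_sum) (auto intro: integrable_mult_right R_integrable simp: ERR_eq)
  ultimately show ?thesis using ibp_R[OF x y] by (simp add: power2_eq_square algebra_simps)
qed

lemma Eloc_eq:
  assumes x: "x \<in> TT" and y: "y \<in> TT"
  shows "expect_mat TT (\<lambda>g. mat_mult TT (diag_part TT (\<lambda>u v. RR g u v - ERR u v)) (RR g)) x y
       = (\<integral>g. RR g x x * RR g x y \<partial>MU) - TH * ERR x y"
proof -
  have pw: "mat_mult TT (diag_part TT (\<lambda>u v. RR g u v - ERR u v)) (RR g) x y = RR g x x * RR g x y - ERR x x * RR g x y" for g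
  proof -
    have "mat_mult TT (diag_part TT (\<lambda>u v. RR g u v - ERR u v)) (RR g) x y
        = (\<Sum>w\<in>TT. if w = x then (RR g x x - ERR x x) * RR g x y else 0)"
      using x y by (auto simp: mat_mult_def diag_part_def intro!: sum.cong)
    also have "\<dots> = (RR g x x - ERR x x) * RR g x y" using x fin by simp
    finally show ?thesis by (simp add: algebra_simps)
  qed
  have th: "ERR x x = TH" using ER_diag[OF x] by (simp add: ERR_eq)
  have "expect_mat TT (\<lambda>g. mat_mult TT (diag_part TT (\<lambda>u v. RR g u v - ERR u v)) (RR g)) x y
      = (\<integral>g. mat_mult TT (diag_part TT (\<lambda>u v. RR g u v - ERR u v)) (RR g) x y \<partial>MU)"
    by (simp only: expect_mat_def)
  also have "\<dots> = (\<integral>g. RR g x x * RR g x y - ERR x x * RR g x y \<partial>MU)"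
    by (rule Bochner_Integration.integral_cong[OF refl]) (rule pw)
  also have "\<dots> = (\<integral>g. RR g x x * RR g x y \<partial>MU) - (\<integral>g. ERR x x * RR g x y \<partial>MU)"
    by (rule Bochner_Integration.integral_diff[OF RR_int2 integrable_mult_right[OF R_integrable]])
  also have "(\<integral>g. ERR x x * RR g x y \<partial>MU) = ERR x x * ERR x y"
    by (simp add: ERR_eq)
  finally show ?thesis using th by simp
qed

lemma main:
  assumes x: "x \<in> TT" and y: "y \<in> TT"
  shows "ERR x y = mat_mult TT
     (mat_inv TT (\<lambda>x y. laplacian d L x y - (z + complex_of_real (lam\<^sup>2) * TH) * mat_id TT x y))
     (mat_add TT (mat_id TT) (\<lambda>x y. complex_of_real (lam\<^sup>2) *
        expect_mat TT (\<lambda>g. mat_mult TT (diag_part TT (\<lambda>u v. RR g u v - ERR u v)) (RR g)) x y)) x y"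
proof -
  define w where "w = z + complex_of_real (lam\<^sup>2) * TH"
  define K where "K = (\<lambda>x y. laplacian d L x y - w * mat_id TT x y)"
  define E where "E = (\<lambda>x y. complex_of_real (lam\<^sup>2) *
        expect_mat TT (\<lambda>g. mat_mult TT (diag_part TT (\<lambda>u v. RR g u v - ERR u v)) (RR g)) x y)"
  have "lam\<^sup>2 * Im TH \<ge> 0" using TH_Im by simp
  then have wpos: "Im w > 0" unfolding w_def using z by simp
  have MK: "mat_mult TT (mat_inv TT K) K = mat_id TT"
    unfolding K_def by (rule herm_inverse(3)[OF fin lap_herm wpos])
  have KER: "mat_mult TT K ERR u v = mat_add TT (mat_id TT) E u v" if u: "u \<in> TT" and v: "v \<in> TT" for u v
  proof -
    have "mat_mult TT K ERR u v = (\<Sum>w'\<in>TT. L0 u w' * ERR w' v) - complex_of_real (lam\<^sup>2) * TH * ERR u v"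
    proof -
      have "mat_mult TT K ERR u v = (\<Sum>w'\<in>TT. L0 u w' * ERR w' v - (if w' = u then complex_of_real (lam\<^sup>2) * TH * ERR u v else 0))"
        using u v by (auto simp: mat_mult_def K_def L0_def w_def mat_id_def algebra_simps intro!: sum.cong)
      also have "\<dots> = (\<Sum>w'\<in>TT. L0 u w' * ERR w' v) - complex_of_real (lam\<^sup>2) * TH * ERR u v"
        using u fin by (simp add: sum_subtractf)
      finally show ?thesis .
    qed
    also have "\<dots> = mat_id TT u v + E u v"
    proof -
      have k: "(\<Sum>w'\<in>TT. L0 u w' * ERR w' v) = mat_id TT u v + complex_of_real (lam\<^sup>2) * (\<integral>g. RR g u u * RR g u v \<partial>MU)"
        using key[OF u v] by (simp add: algebra_simps)
      have e: "E u v = complex_of_real (lam\<^sup>2) * ((\<integral>g. RR g u u * RR g u v \<partial>MU) - TH * ERR u v)"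
        unfolding E_def using Eloc_eq[OF u v] by simp
      show ?thesis unfolding k e by (simp add: algebra_simps)
    qed
    also have "\<dots> = mat_add TT (mat_id TT) E u v" using u v by (simp add: mat_add_def)
    finally show ?thesis .
  qed
  have "mat_mult TT (mat_inv TT K) (mat_add TT (mat_id TT) E) x y = mat_mult TT (mat_inv TT K) (mat_mult TT K ERR) x y"
    using x y KER by (auto simp: mat_mult_def intro!: sum.cong)
  also have "\<dots> = mat_mult TT (mat_mult TT (mat_inv TT K) K) ERR x y"
    by (rule mat_mult_assoc[OF fin x y])
  also have "\<dots> = ERR x y" unfolding MK by (rule mat_mult_id_left[OF x y fin])
  finally show ?thesis unfolding K_def E_def w_def by simp
qed

end

theorem proposition1p4:
  fixes d L :: nat and lam :: real and z :: complex
  assumes "d \<ge> 2" and "lam > 0" and "L \<ge> 1" and "Im z > 0"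
  defines "T \<equiv> torus d L"
  defines "R \<equiv> (\<lambda>g. resolvent d L lam g z)"
  defines "ER \<equiv> expect_mat T R"
  defines "theta \<equiv> ER origin origin"
  defines "M \<equiv> mat_inv T (\<lambda>x y. laplacian d L x y
                 - (z + complex_of_real (lam\<^sup>2) * theta) * mat_id T x y)"
  defines "Eloc \<equiv> (\<lambda>x y. complex_of_real (lam\<^sup>2) *
                 expect_mat T (\<lambda>g. mat_mult T (diag_part T (\<lambda>u v. R g u v - ER u v)) (R g)) x y)"
  shows "\<forall>x\<in>T. \<forall>y\<in>T. ER x y = mat_mult T M (mat_add T (mat_id T) Eloc) x y"
proof -
  interpret resolL d L lam z
    by unfold_locales (use assms in auto)
  show ?thesis
    unfolding T_def R_def ER_def theta_def M_def Eloc_def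
    using main by blast
qed

end
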